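(* The SWAP operation $U^{SWAP}=|00\rangle\langle00|+|01\rangle\langle10|+|10\rangle\langle01|+|11\rangle\langle11|$ is not probabilistically implementable (with any nonzero probability) over the $2$-bridge ladder network, i.e. the $(2,2)$-cluster network.
   Context: The $(2,2)$-cluster network has nodes $v_{1,1},v_{2,1}$ (inputs), $v_{1,2},v_{2,2}$ (outputs) and edges $\{v_{1,1},v_{2,1}\},\{v_{1,2},v_{2,2}\},\{v_{1,1},v_{1,2}\},\{v_{2,1},v_{2,2}\}$, each carrying an EPR pair $(|00\rangle+|11\rangle)/\sqrt2$ with one qubit at each endpoint (resource state $|\Phi\rangle_{\mathcal R}$). Input qubit $i$ is at $v_{i,1}$, output qubit $i$ at $v_{i,2}$. $U$ is probabilistically implementable if there exist a stochastic LOCC map $\Gamma$ (finite-round local operations at single nodes and classical communication, with post-selection on a subset of outcomes) and $p>0$ with $\Gamma(|\psi\rangle\langle\psi|\otimes|\Phi\rangle\langle\Phi|_{\mathcal R})=pU|\psi\rangle\langle\psi|U^\dagger$ for all pure input states $|\psi\rangle$. *)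

theory Defs
  imports Complex_Main
begin

text \<open>Nodes are numbered 0 = v_{1,1}, 1 = v_{2,1}, 2 = v_{1,2}, 3 = v_{2,2}.
  A global state of the network lives in the tensor product of the local spaces
  C^{d_0} (x) C^{d_1} (x) C^{d_2} (x) C^{d_3}; basis vectors are indexed by
  multi-indices (lists of length 4, k-th entry < d_k).  A global operator from
  local dimensions ds to ds' is a function (row multi-index, column multi-index)
  to complex numbers; a local operator is a matrix as function nat => nat => complex.\<close>

type_synonym gop = "nat list \<Rightarrow> nat list \<Rightarrow> complex"
type_synonym lop = "nat \<Rightarrow> nat \<Rightarrow> complex"

definition idx :: "nat list \<Rightarrow> nat list set" where
  "idx ds = {i. length i = length ds \<and> (\<forall>k<length ds. i ! k < ds ! k)}"

definition id_op :: gop where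
  "id_op i j = (if i = j then 1 else 0)"

text \<open>Left-multiplying a global operator K by the local operator A acting at node k
  (whose current local dimension is d); the identity acts on all other nodes.\<close>
definition apply_local :: "nat \<Rightarrow> nat \<Rightarrow> lop \<Rightarrow> gop \<Rightarrow> gop" where
  "apply_local k d A K = (\<lambda>i j. \<Sum>a<d. A (i ! k) a * K (i[k := a]) j)"

definition is_instrument :: "nat \<Rightarrow> nat \<Rightarrow> lop list \<Rightarrow> bool" where
  "is_instrument d d' As \<longleftrightarrow>
     (\<forall>a<d. \<forall>b<d. (\<Sum>A\<leftarrow>As. \<Sum>r<d'. cnj (A r a) * A r b) = (if a = b then 1 else 0))"

text \<open>Finite-round LOCC protocols, as the list of leaves of the protocol tree.
  Each leaf records the current local dimensions and the (product of Kraus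
  operators) global operator accumulated along its branch.  A protocol is built by
  repeatedly choosing a leaf and letting one single node perform a local
  instrument there (chosen depending on the whole classical history, i.e. the
  branch), which splits the leaf into one leaf per outcome.\<close>
inductive locc :: "nat list \<Rightarrow> (nat list \<times> gop) list \<Rightarrow> bool" for ds0 where
  init: "locc ds0 [(ds0, id_op)]"
| refine: "\<lbrakk> locc ds0 L; n < length L; L ! n = (ds, K); k < length ds;
             is_instrument (ds ! k) d' As \<rbrakk>
           \<Longrightarrow> locc ds0 (take n L @ map (\<lambda>A. (ds[k := d'], apply_local k (ds ! k) A K)) As
                          @ drop (Suc n) L)"

definition apply_vec :: "nat list \<Rightarrow> gop \<Rightarrow> (nat list \<Rightarrow> complex) \<Rightarrow> nat list \<Rightarrow> complex" where
  "apply_vec ds K v i = (\<Sum>j\<in>idx ds. K i j * v j)"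

text \<open>Local systems:
  v_{1,1} (node 0): input qubit 1, half of EPR on {v11,v21}, half of EPR on {v11,v12};
     local index 4*in1 + 2*e_{11,21} + e_{11,12}, dimension 8.
  v_{2,1} (node 1): input qubit 2, half of EPR on {v11,v21}, half of EPR on {v21,v22};
     local index 4*in2 + 2*e_{11,21} + e_{21,22}, dimension 8.
  v_{1,2} (node 2): half of EPR on {v12,v22}, half of EPR on {v11,v12};
     local index 2*e_{12,22} + e_{11,12}, dimension 4.
  v_{2,2} (node 3): half of EPR on {v12,v22}, half of EPR on {v21,v22};
     local index 2*e_{12,22} + e_{21,22}, dimension 4.\<close>

definition cluster_dims :: "nat list" where
  "cluster_dims = [8, 8, 4, 4]"

definition epr :: "nat \<Rightarrow> nat \<Rightarrow> complex" where
  "epr a b = (if a = b then complex_of_real (1 / sqrt 2) else 0)"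

text \<open>The vector |psi> (x) |Phi>_R, where psi is a two-qubit vector, psi q1 q2.\<close>
definition init_vec :: "(nat \<Rightarrow> nat \<Rightarrow> complex) \<Rightarrow> nat list \<Rightarrow> complex" where
  "init_vec \<psi> i =
     \<psi> (i ! 0 div 4) (i ! 1 div 4)
     * epr ((i ! 0 div 2) mod 2) ((i ! 1 div 2) mod 2)
     * epr (i ! 2 div 2) (i ! 3 div 2)
     * epr (i ! 0 mod 2) (i ! 2 mod 2)
     * epr (i ! 1 mod 2) (i ! 3 mod 2)"

text \<open>Two-qubit unitaries as 4x4 matrices in the basis |q1 q2> = index 2*q1+q2.\<close>
definition apply_U :: "lop \<Rightarrow> (nat \<Rightarrow> nat \<Rightarrow> complex) \<Rightarrow> nat \<Rightarrow> nat \<Rightarrow> complex" where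
  "apply_U U \<psi> a1 a2 = (\<Sum>b1<2. \<Sum>b2<2. U (2 * a1 + a2) (2 * b1 + b2) * \<psi> b1 b2)"

text \<open>Probabilistic implementability: a finite-round LOCC protocol, post-selected on
  a subset T of its leaves.  Every post-selected leaf ends with local dimensions
  [1,1,2,2]: nodes v_{1,1}, v_{2,1} hold nothing (all their systems traced out,
  which is itself a local operation) and v_{i,2} holds exactly output qubit i.
  The resulting map Gamma(rho) = sum_{n in T} K_n rho K_n^dagger must equal
  p U |psi><psi| U^dagger on every pure (normalized) input |psi>.\<close>
definition prob_implementable :: "lop \<Rightarrow> bool" where
  "prob_implementable U \<longleftrightarrow>
     (\<exists>L T (p::real).
        locc cluster_dims L \<and> T \<subseteq> {..<length L} \<and>
        (\<forall>n\<in>T. fst (L ! n) = [1, 1, 2, 2]) \<and> p > 0 \<and>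
        (\<forall>\<psi>. (\<Sum>a<2. \<Sum>b<2. (cmod (\<psi> a b))\<^sup>2) = 1 \<longrightarrow>
           (\<forall>a1<2. \<forall>a2<2. \<forall>b1<2. \<forall>b2<2.
              (\<Sum>n\<in>T. apply_vec cluster_dims (snd (L ! n)) (init_vec \<psi>) [0, 0, a1, a2]
                      * cnj (apply_vec cluster_dims (snd (L ! n)) (init_vec \<psi>) [0, 0, b1, b2]))
              = complex_of_real p * apply_U U \<psi> a1 a2 * cnj (apply_U U \<psi> b1 b2))))"

definition U_SWAP :: lop where
  "U_SWAP r c = (if (r, c) \<in> {(0, 0), (1, 2), (2, 1), (3, 3)} then 1 else 0)"

end

theory Submission
  imports Defs
begin

lemma sum2: "(\<Sum>i<(2::nat). f i) = f 0 + f 1"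
  by (simp add: numeral_2_eq_2)

lemma less2: "(i::nat) < 2 \<Longrightarrow> i = 0 \<or> i = 1" by auto

definition det2 :: "(nat \<Rightarrow> nat \<Rightarrow> complex) \<Rightarrow> complex" where
  "det2 A = A 0 0 * A 1 1 - A 0 1 * A 1 0"

definition mm :: "(nat \<Rightarrow> nat \<Rightarrow> complex) \<Rightarrow> (nat \<Rightarrow> nat \<Rightarrow> complex) \<Rightarrow> nat \<Rightarrow> nat \<Rightarrow> complex" where
  "mm A B r s = (\<Sum>t<2. A r t * B t s)"

lemma det_mm: "det2 (mm A B) = det2 A * det2 B"
  by (simp add: det2_def mm_def sum2 algebra_simps)

lemma det_zero_left:
  assumes "det2 A \<noteq> 0" "\<forall>r<2. \<forall>s<2. mm A B r s = 0" "r < 2" "s < 2"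
  shows "B r s = 0"
proof -
  have e: "A 0 0 * B 0 s + A 0 1 * B 1 s = 0" "A 1 0 * B 0 s + A 1 1 * B 1 s = 0"
    using assms(2,4) by (auto simp: mm_def sum2)
  have "det2 A * B 0 s = A 1 1 * (A 0 0 * B 0 s + A 0 1 * B 1 s) - A 0 1 * (A 1 0 * B 0 s + A 1 1 * B 1 s)"
    by (simp add: det2_def algebra_simps)
  hence 0: "B 0 s = 0" using e assms(1) by simp
  have "det2 A * B 1 s = A 0 0 * (A 1 0 * B 0 s + A 1 1 * B 1 s) - A 1 0 * (A 0 0 * B 0 s + A 0 1 * B 1 s)"
    by (simp add: det2_def algebra_simps)
  hence 1: "B 1 s = 0" using e assms(1) by simp
  show ?thesis using 0 1 less2[OF assms(3)] by auto
qed

lemma det_zero_right: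
  assumes "det2 B \<noteq> 0" "\<forall>r<2. \<forall>s<2. mm A B r s = 0" "r < 2" "s < 2"
  shows "A r s = 0"
proof -
  have e: "A r 0 * B 0 0 + A r 1 * B 1 0 = 0" "A r 0 * B 0 1 + A r 1 * B 1 1 = 0"
    using assms(2,3) by (auto simp: mm_def sum2)
  have "det2 B * A r 0 = B 1 1 * (A r 0 * B 0 0 + A r 1 * B 1 0) - B 1 0 * (A r 0 * B 0 1 + A r 1 * B 1 1)"
    by (simp add: det2_def algebra_simps)
  hence 0: "A r 0 = 0" using e assms(1) by simp
  have "det2 B * A r 1 = B 0 0 * (A r 0 * B 0 1 + A r 1 * B 1 1) - B 0 1 * (A r 0 * B 0 0 + A r 1 * B 1 0)"
    by (simp add: det2_def algebra_simps)
  hence 1: "A r 1 = 0" using e assms(1) by simp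
  show ?thesis using 0 1 less2[OF assms(4)] by auto
qed

lemma rk_c1: "(Y::nat\<Rightarrow>nat\<Rightarrow>complex) 0 0 \<noteq> 0 \<Longrightarrow> Y 1 1 = Y 1 0 / Y 0 0 * Y 0 1 \<Longrightarrow> \<exists>u v. \<forall>r<2. \<forall>s<2. Y r s = u r * v s"
  apply (rule exI[where x="\<lambda>r::nat. if r = 0 then 1 else Y 1 0 / Y 0 0"], rule exI[where x="\<lambda>s. Y 0 s"])
  apply (intro allI impI) apply (drule less2)+ apply (elim disjE) apply simp_all done
lemma rk_c2: "(Y::nat\<Rightarrow>nat\<Rightarrow>complex) 0 0 = 0 \<Longrightarrow> Y 1 0 = 0 \<Longrightarrow> \<exists>u v. \<forall>r<2. \<forall>s<2. Y r s = u r * v s"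
  apply (rule exI[where x="\<lambda>r. Y r 1"], rule exI[where x="\<lambda>s::nat. if s = 0 then 0 else 1"])
  apply (intro allI impI) apply (drule less2)+ apply (elim disjE) apply simp_all done
lemma rk_c3: "(Y::nat\<Rightarrow>nat\<Rightarrow>complex) 0 0 = 0 \<Longrightarrow> Y 0 1 = 0 \<Longrightarrow> \<exists>u v. \<forall>r<2. \<forall>s<2. Y r s = u r * v s"
  apply (rule exI[where x="\<lambda>r::nat. if r = 0 then 0 else 1"], rule exI[where x="\<lambda>s. Y 1 s"])
  apply (intro allI impI) apply (drule less2)+ apply (elim disjE) apply simp_all done

lemma rank1:
  assumes "det2 Y = 0"
  shows "\<exists>u v. \<forall>r<2. \<forall>s<2. Y r s = u r * v s"
proof (cases "Y 0 0 = 0")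
  case False
  have e: "Y 1 1 = Y 1 0 / Y 0 0 * Y 0 1" using assms False by (simp add: det2_def field_simps)
  show ?thesis using rk_c1[of Y, OF False e] .
next
  case True
  show ?thesis
  proof (cases "Y 0 1 = 0")
    case False
    with True assms have z: "Y 1 0 = 0" by (simp add: det2_def)
    show ?thesis using rk_c2[of Y, OF True z] .
  next
    case c2: True
    show ?thesis using rk_c3[of Y, OF True c2] .
  qed
qed

lemma quad_root:
  fixes d0 e d1 :: complex
  shows "\<exists>\<alpha> \<beta>. (\<alpha> \<noteq> 0 \<or> \<beta> \<noteq> 0) \<and> \<alpha>^2 * d0 + \<alpha> * \<beta> * e + \<beta>^2 * d1 = 0"
proof (cases "d0 = 0")
  case True
  then show ?thesis by (rule_tac x=1 in exI, rule_tac x=0 in exI) simp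
next
  case False
  define s where "s = csqrt (e^2 - 4 * d0 * d1)"
  have s2: "s^2 = e^2 - 4 * d0 * d1" by (simp add: s_def)
  define a where "a = (s - e) / (2 * d0)"
  have "a^2 * d0 + a * 1 * e + 1^2 * d1 = (s^2 - e^2 + 4*d0*d1) / (4 * d0)"
    using False by (simp add: a_def field_simps power2_eq_square)
  also have "\<dots> = 0" using s2 by simp
  finally show ?thesis by (rule_tac x=a in exI, rule_tac x=1 in exI) simp
qed

lemma ring_impossible:
  fixes x y z w :: "nat \<Rightarrow> nat \<Rightarrow> nat \<Rightarrow> complex" and lam :: complex
  assumes H: "\<And>j m k n. j < 2 \<Longrightarrow> m < 2 \<Longrightarrow> k < 2 \<Longrightarrow> n < 2 \<Longrightarrow>
     (\<Sum>a<2. \<Sum>b<2. \<Sum>c<2. \<Sum>d<2. x j c a * y m a d * z k d b * w n b c)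
       = (if j = k \<and> m = n then lam else 0)"
    and lam: "lam \<noteq> 0"
  shows False
proof -
  obtain \<alpha> \<beta> where ab: "\<alpha> \<noteq> 0 \<or> \<beta> \<noteq> 0"
    and q: "\<alpha>^2 * det2 (y 0) + \<alpha> * \<beta> * (y 0 0 0 * y 1 1 1 + y 1 0 0 * y 0 1 1 - y 0 0 1 * y 1 1 0 - y 1 0 1 * y 0 1 0) + \<beta>^2 * det2 (y 1) = 0"
    using quad_root by blast
  define Y where "Y = (\<lambda>a d. \<alpha> * y 0 a d + \<beta> * y 1 a d)"
  have "det2 Y = 0" using q by (simp add: Y_def det2_def algebra_simps power2_eq_square)
  then obtain u v where uv: "\<forall>r<2. \<forall>s<2. Y r s = u r * v s" using rank1 by blast
  have HY: "(\<Sum>a<2. \<Sum>b<2. \<Sum>c<2. \<Sum>d<2. x j c a * Y a d * z k d b * w n b c)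
       = (if j = k then lam * (if n = 0 then \<alpha> else \<beta>) else 0)"
    if "j<2" "k<2" "n<2" for j k n
  proof -
    have "(\<Sum>a<2. \<Sum>b<2. \<Sum>c<2. \<Sum>d<2. x j c a * Y a d * z k d b * w n b c)
      = \<alpha> * (\<Sum>a<2. \<Sum>b<2. \<Sum>c<2. \<Sum>d<2. x j c a * y 0 a d * z k d b * w n b c)
       + \<beta> * (\<Sum>a<2. \<Sum>b<2. \<Sum>c<2. \<Sum>d<2. x j c a * y 1 a d * z k d b * w n b c)"
      by (simp add: Y_def sum2 algebra_simps)
    also have "\<dots> = (if j = k then lam * (if n = 0 then \<alpha> else \<beta>) else 0)"
    proof -
      have h0: "(\<Sum>a<2. \<Sum>b<2. \<Sum>c<2. \<Sum>d<2. x j c a * y 0 a d * z k d b * w n b c) = (if j = k \<and> 0 = n then lam else 0)"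
        using H that by simp
      have h1: "(\<Sum>a<2. \<Sum>b<2. \<Sum>c<2. \<Sum>d<2. x j c a * y 1 a d * z k d b * w n b c) = (if j = k \<and> 1 = n then lam else 0)"
        using H that by simp
      show ?thesis unfolding h0 h1 using less2[OF \<open>n<2\<close>] by (elim disjE) simp_all
    qed
    finally show ?thesis .
  qed
  define r where "r = (\<lambda>k b. \<Sum>d<2. v d * z k d b)"
  define s where "s = (\<lambda>c j. \<Sum>a<2. x j c a * u a)"
  have HS: "mm r (mm (w n) s) k j = (if j = k then lam * (if n = 0 then \<alpha> else \<beta>) else 0)"
    if "j<2" "k<2" "n<2" for j k n
  proof -
    have "mm r (mm (w n) s) k j = (\<Sum>a<2. \<Sum>b<2. \<Sum>c<2. \<Sum>d<2. x j c a * Y a d * z k d b * w n b c)"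
      using uv by (simp add: mm_def r_def s_def sum2 algebra_simps)
    then show ?thesis using HY[OF that] by simp
  qed
  define w0 where "w0 = (\<lambda>b c. \<beta> * w 0 b c - \<alpha> * w 1 b c)"
  obtain \<gamma> \<delta> where gd: "\<alpha> * \<gamma> + \<beta> * \<delta> = 1"
    using ab by (metis add.right_neutral add_0 mult_zero_right right_inverse)
  define w1 where "w1 = (\<lambda>b c. \<gamma> * w 0 b c + \<delta> * w 1 b c)"
  have mmlin: "mm r (mm (\<lambda>b c. p * w 0 b c + q * w 1 b c) s) k j
      = p * mm r (mm (w 0) s) k j + q * mm r (mm (w 1) s) k j" for p q k j
    by (simp add: mm_def sum2 algebra_simps)
  have E0: "\<forall>k<2. \<forall>j<2. mm r (mm w0 s) k j = 0"
  proof (intro allI impI)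
    fix k j :: nat assume "k<2" "j<2"
    have "mm r (mm w0 s) k j = \<beta> * mm r (mm (w 0) s) k j + (-\<alpha>) * mm r (mm (w 1) s) k j"
      unfolding w0_def using mmlin[of \<beta> "-\<alpha>"] by simp
    thus "mm r (mm w0 s) k j = 0" using HS[of j k 0] HS[of j k 1] \<open>k<2\<close> \<open>j<2\<close> by simp
  qed
  have E1: "mm r (mm w1 s) k j = (if j = k then lam else 0)" if "k<2" "j<2" for k j
  proof -
    have "mm r (mm w1 s) k j = \<gamma> * mm r (mm (w 0) s) k j + \<delta> * mm r (mm (w 1) s) k j"
      unfolding w1_def using mmlin by simp
    moreover have "\<alpha>*(\<gamma>*lam)+\<beta>*(\<delta>*lam) = (\<alpha> * \<gamma> + \<beta> * \<delta>)*lam" by (simp add: algebra_simps)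
    ultimately show ?thesis using HS[of j k 0] HS[of j k 1] that gd by (simp add: algebra_simps)
  qed
  have "det2 (mm r (mm w1 s)) = lam * lam"
    using E1 by (simp add: det2_def)
  hence dd: "det2 r * (det2 w1 * det2 s) = lam * lam" by (simp add: det_mm)
  hence dr: "det2 r \<noteq> 0" and ds: "det2 s \<noteq> 0" using lam by auto
  have "\<forall>b<2. \<forall>j<2. mm w0 s b j = 0"
    using det_zero_left[OF dr E0] by blast
  hence w00: "w0 b c = 0" if "b<2" "c<2" for b c
    using det_zero_right[OF ds] that by blast
  have Z: "(\<Sum>a<2. \<Sum>b<2. \<Sum>c<2. \<Sum>d<2. x 0 c a * y m a d * z 0 d b * w0 b c) = 0" for m
    using w00 by (simp add: sum2)
  have L: "(\<Sum>a<2. \<Sum>b<2. \<Sum>c<2. \<Sum>d<2. x 0 c a * y m a d * z 0 d b * w0 b c)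
     = \<beta> * (\<Sum>a<2. \<Sum>b<2. \<Sum>c<2. \<Sum>d<2. x 0 c a * y m a d * z 0 d b * w 0 b c)
       - \<alpha> * (\<Sum>a<2. \<Sum>b<2. \<Sum>c<2. \<Sum>d<2. x 0 c a * y m a d * z 0 d b * w 1 b c)" for m
    by (simp add: w0_def sum2 algebra_simps)
  have "\<beta> * lam = 0"
    using Z[of 0] L[of 0] H[of 0 0 0 0] H[of 0 0 0 1] by simp
  moreover have "\<alpha> * lam = 0"
    using Z[of 1] L[of 1] H[of 0 1 0 0] H[of 0 1 0 1] by simp
  ultimately have "\<beta> * lam = 0" "\<alpha> * lam = 0" by auto
  thus False using ab lam by simp
qed

definition prodop :: "(nat \<Rightarrow> lop) \<Rightarrow> gop" where
  "prodop M i j = M 0 (i!0) (j!0) * M 1 (i!1) (j!1) * M 2 (i!2) (j!2) * M 3 (i!3) (j!3)"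

definition isprod :: "nat list \<times> gop \<Rightarrow> bool" where
  "isprod x \<longleftrightarrow> length (fst x) = 4 \<and>
     (\<exists>M. \<forall>i j. length i = 4 \<longrightarrow> length j = 4 \<longrightarrow> snd x i j = prodop M i j)"

lemma len4: "length (i::nat list) = 4 \<Longrightarrow> \<exists>a b c d. i = [a,b,c,d]"
  by (simp add: numeral_eq_Suc length_Suc_conv) blast

lemma less4: "(k::nat) < 4 \<Longrightarrow> k = 0 \<or> k = 1 \<or> k = 2 \<or> k = 3" by auto

lemma isprod_init: "isprod ([8,8,4,4], id_op)"
proof -
  have "id_op i j = prodop (\<lambda>k a b. if a = b then 1 else 0) i j" if li: "length i = 4" and lj: "length j = 4" for i j
  proof -
    obtain a b c d where i: "i = [a,b,c,d]" using len4[OF li] by blast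
    obtain a' b' c' d' where j: "j = [a',b',c',d']" using len4[OF lj] by blast
    show ?thesis by (simp add: i j id_op_def prodop_def)
  qed
  thus ?thesis by (auto simp: isprod_def)
qed

lemma apply_local_prod:
  assumes "k < 4" "length i = 4" "length j = 4"
    and K: "\<forall>i j. length i = 4 \<longrightarrow> length j = 4 \<longrightarrow> K i j = prodop M i j"
  shows "apply_local k d A K i j = prodop (M(k := (\<lambda>r c. \<Sum>a<d. A r a * M k a c))) i j"
proof -
  obtain i0 i1 i2 i3 where i: "i = [i0,i1,i2,i3]" using len4[OF assms(2)] by blast
  have "apply_local k d A K i j = (\<Sum>a<d. A (i!k) a * prodop M (i[k := a]) j)"
    unfolding apply_local_def using K assms(2,3) by simp
  also have "\<dots> = prodop (M(k := (\<lambda>r c. \<Sum>a<d. A r a * M k a c))) i j"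
    using less4[OF assms(1)]
    by (elim disjE) (simp_all add: i prodop_def sum_distrib_right sum_distrib_left mult_ac)
  finally show ?thesis .
qed

lemma locc_isprod: "locc ds0 L \<Longrightarrow> ds0 = [8,8,4,4] \<Longrightarrow> \<forall>x\<in>set L. isprod x"
proof (induction rule: locc.induct)
  case init
  then show ?case using isprod_init by simp
next
  case (refine L n ds K k d' As)
  have old: "isprod (ds, K)" using refine by (metis nth_mem)
  then obtain M where M: "\<forall>i j. length i = 4 \<longrightarrow> length j = 4 \<longrightarrow> K i j = prodop M i j"
    and l: "length ds = 4" by (auto simp: isprod_def)
  have new: "isprod (ds[k := d'], apply_local k (ds ! k) A K)" for A
    unfolding isprod_def using apply_local_prod[OF _ _ _ M] refine.hyps(4) l by auto
  have "set (take n L @ map (\<lambda>A. (ds[k := d'], apply_local k (ds ! k) A K)) As @ drop (Suc n) L)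
     \<subseteq> set L \<union> (\<lambda>A. (ds[k := d'], apply_local k (ds ! k) A K)) ` set As"
    using set_take_subset[of n L] set_drop_subset[of "Suc n" L] by auto
  then show ?case using refine new by blast
qed

lemma bits3: "(q::nat) < 2 \<Longrightarrow> a < 2 \<Longrightarrow> c < 2 \<Longrightarrow>
  (4*q+2*a+c) div 4 = q \<and> ((4*q+2*a+c) div 2) mod 2 = a \<and> (4*q+2*a+c) mod 2 = c"
  by (drule less2)+ (elim disjE; simp)

lemma bits2: "(b::nat) < 2 \<Longrightarrow> c < 2 \<Longrightarrow> (2*b+c) div 2 = b \<and> (2*b+c) mod 2 = c"
  by (drule less2)+ (elim disjE; simp)

definition phi :: "nat \<times> nat \<times> nat \<times> nat \<times> nat \<times> nat \<Rightarrow> nat list" where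
  "phi t = (case t of (q1,q2,a,b,c,d) \<Rightarrow> [4*q1+2*a+c, 4*q2+2*a+d, 2*b+c, 2*b+d])"

definition B6 :: "(nat \<times> nat \<times> nat \<times> nat \<times> nat \<times> nat) set" where
  "B6 = {..<2} \<times> {..<2} \<times> {..<2} \<times> {..<2} \<times> {..<2} \<times> {..<2}"

lemma all4: "(\<forall>k<(4::nat). P k) \<longleftrightarrow> P 0 \<and> P 1 \<and> P 2 \<and> P 3"
  apply (rule iffI)
   apply simp
  apply (intro allI impI) apply (drule less4) apply (elim disjE conjE) apply simp_all done

lemma idx_cl: "J \<in> idx cluster_dims \<longleftrightarrow> length J = 4 \<and> J!0 < 8 \<and> J!1 < 8 \<and> J!2 < 4 \<and> J!3 < 4"
proof -
  have l: "length [8,8,4,4::nat] = 4" by simp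
  show ?thesis unfolding idx_def cluster_dims_def mem_Collect_eq l all4 by simp
qed

lemma phi_idx: "t \<in> B6 \<Longrightarrow> phi t \<in> idx cluster_dims"
  by (auto simp: B6_def phi_def idx_cl)

lemma inj_phi: "inj_on phi B6"
proof (rule inj_onI)
  fix s t assume s: "s \<in> B6" and t: "t \<in> B6" and e: "phi s = phi t"
  obtain q1 q2 a b c d where sd: "s = (q1,q2,a,b,c,d)" by (cases s) auto
  obtain q1' q2' a' b' c' d' where td: "t = (q1',q2',a',b',c',d')" by (cases t) auto
  have e0: "4*q1+2*a+c = 4*q1'+2*a'+c'" and e1: "4*q2+2*a+d = 4*q2'+2*a'+d'"
    and e2: "2*b+c = 2*b'+c'" using e by (simp_all add: sd td phi_def)
  have r1: "q1 = q1' \<and> a = a' \<and> c = c'"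
    using bits3[of q1 a c] bits3[of q1' a' c'] s t e0 by (simp add: sd td B6_def)
  have r2: "q2 = q2' \<and> d = d'"
    using bits3[of q2 a d] bits3[of q2' a' d'] s t e1 by (simp add: sd td B6_def)
  have r3: "b = b'"
    using bits2[of b c] bits2[of b' c'] s t e2 by (simp add: sd td B6_def)
  show "s = t" using r1 r2 r3 sd td by simp
qed

lemma finite_idx: "finite (idx cluster_dims)"
proof -
  have "idx cluster_dims \<subseteq> {xs. set xs \<subseteq> {..<8} \<and> length xs = 4}"
  proof
    fix J assume "J \<in> idx cluster_dims"
    hence J: "length J = 4" "J!0 < 8" "J!1 < 8" "J!2 < 4" "J!3 < 4" by (auto simp: idx_cl)
    then obtain a b c d where "J = [a,b,c,d]" using len4 by blast
    with J show "J \<in> {xs. set xs \<subseteq> {..<8} \<and> length xs = 4}" by auto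
  qed
  thus ?thesis by (rule finite_subset) (rule finite_lists_length_eq, simp)
qed

lemma epr_nz: "epr a b \<noteq> 0 \<Longrightarrow> a = b" by (simp add: epr_def split: if_splits)

lemma dec3: "4*((j::nat) div 4) + 2*((j div 2) mod 2) + j mod 2 = j"
  by presburger

lemma dec2: "2*((j::nat) div 2) + j mod 2 = j"
  by presburger

lemma init_zero:
  assumes "J \<in> idx cluster_dims" "J \<notin> phi ` B6"
  shows "init_vec \<psi> J = 0"
proof (rule ccontr)
  assume nz: "init_vec \<psi> J \<noteq> 0"
  have J: "length J = 4" "J!0 < 8" "J!1 < 8" "J!2 < 4" "J!3 < 4" using assms(1) by (auto simp: idx_cl)
  then obtain j0 j1 j2 j3 where Jd: "J = [j0,j1,j2,j3]" using len4 by blast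
  have b: "j0 < 8" "j1 < 8" "j2 < 4" "j3 < 4" using J by (simp_all add: Jd)
  have nz2: "epr ((j0 div 2) mod 2) ((j1 div 2) mod 2) \<noteq> 0 \<and> epr (j2 div 2) (j3 div 2) \<noteq> 0
     \<and> epr (j0 mod 2) (j2 mod 2) \<noteq> 0 \<and> epr (j1 mod 2) (j3 mod 2) \<noteq> 0"
    using nz by (simp add: init_vec_def Jd)
  have e1: "(j0 div 2) mod 2 = (j1 div 2) mod 2" and e2: "j2 div 2 = j3 div 2"
    and e3: "j0 mod 2 = j2 mod 2" and e4: "j1 mod 2 = j3 mod 2"
    using nz2 epr_nz by blast+
  define t where "t = (j0 div 4, j1 div 4, (j0 div 2) mod 2, j2 div 2, j0 mod 2, j1 mod 2)"
  have "t \<in> B6" using b by (auto simp: t_def B6_def)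
  moreover have "phi t = J"
  proof -
    have "4*(j1 div 4) + 2*((j0 div 2) mod 2) + j1 mod 2 = j1" using e1 dec3[of j1] by simp
    moreover have "2*(j2 div 2) + j0 mod 2 = j2" using e3 dec2[of j2] by simp
    moreover have "2*(j2 div 2) + j1 mod 2 = j3" using e2 e4 dec2[of j3] by simp
    ultimately show ?thesis unfolding t_def phi_def Jd prod.case using dec3[of j0] by simp
  qed
  ultimately show False using assms(2) by blast
qed

lemma init_phi:
  assumes "t \<in> B6"
  shows "init_vec \<psi> (phi t) = (case t of (q1,q2,a,b,c,d) \<Rightarrow> \<psi> q1 q2 / 4)"
proof -
  obtain q1 q2 a b c d where td: "t = (q1,q2,a,b,c,d)" by (cases t) auto
  have bd: "q1<2" "q2<2" "a<2" "b<2" "c<2" "d<2" using assms by (auto simp: td B6_def)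
  have s: "complex_of_real (1 / sqrt 2) ^ 4 = 1/4"
  proof -
    have "(1 / sqrt 2) ^ 4 = (1/4::real)" by (simp add: power_divide power4_eq_xxxx flip: power2_eq_square)
    have "complex_of_real (1 / sqrt 2) ^ 4 = complex_of_real ((1/sqrt 2)^4)" by (rule of_real_power[symmetric])
    also have "\<dots> = complex_of_real (1/4)" using \<open>(1 / sqrt 2) ^ 4 = (1/4::real)\<close> by (simp only:)
    also have "\<dots> = 1/4" by simp
    finally show ?thesis .
  qed
  show ?thesis
    using bits3[OF bd(1,3,5)] bits3[OF bd(2,3,6)] bits2[OF bd(4,5)] bits2[OF bd(4,6)] s
    by (simp add: td phi_def init_vec_def epr_def power4_eq_xxxx mult_ac)
qed

lemma F:
  assumes K: "\<forall>i j. length i = 4 \<longrightarrow> length j = 4 \<longrightarrow> K i j = prodop M i j"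
  shows "apply_vec cluster_dims K (init_vec \<psi>) [0,0,o1,o2] =
    (\<Sum>q1<2. \<Sum>q2<2. \<psi> q1 q2 * ((1/4) * (\<Sum>a<2. \<Sum>b<2. \<Sum>c<2. \<Sum>d<2.
        M 0 0 (4*q1+2*a+c) * M 1 0 (4*q2+2*a+d) * M 3 o2 (2*b+d) * M 2 o1 (2*b+c))))"
proof -
  let ?i = "[0,0,o1,o2] :: nat list"
  let ?f = "\<lambda>J. prodop M ?i J * init_vec \<psi> J"
  have "apply_vec cluster_dims K (init_vec \<psi>) ?i = (\<Sum>J\<in>idx cluster_dims. ?f J)"
    unfolding apply_vec_def by (rule sum.cong) (auto simp: idx_cl K)
  also have "\<dots> = (\<Sum>J\<in>phi ` B6. ?f J)"
    by (rule sum.mono_neutral_left[symmetric]) (auto simp: finite_idx phi_idx init_zero)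
  also have "\<dots> = (\<Sum>t\<in>B6. ?f (phi t))"
    by (rule sum.reindex[OF inj_phi, unfolded comp_def])
  also have "\<dots> = (\<Sum>t\<in>B6. case t of (q1,q2,a,b,c,d) \<Rightarrow>
        M 0 0 (4*q1+2*a+c) * M 1 0 (4*q2+2*a+d) * M 2 o1 (2*b+c) * M 3 o2 (2*b+d) * (\<psi> q1 q2 / 4))"
  proof (rule sum.cong[OF refl])
    fix t assume t: "t \<in> B6"
    obtain q1 q2 a b c d where td: "t = (q1,q2,a,b,c,d)" by (cases t) auto
    have 1: "init_vec \<psi> (phi t) = \<psi> q1 q2 / 4" using init_phi[OF t] td by simp
    have 2: "prodop M ?i (phi t) = M 0 0 (4*q1+2*a+c) * M 1 0 (4*q2+2*a+d) * M 2 o1 (2*b+c) * M 3 o2 (2*b+d)"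
      by (simp add: td phi_def prodop_def)
    show "?f (phi t) = (case t of (q1,q2,a,b,c,d) \<Rightarrow>
        M 0 0 (4*q1+2*a+c) * M 1 0 (4*q2+2*a+d) * M 2 o1 (2*b+c) * M 3 o2 (2*b+d) * (\<psi> q1 q2 / 4))"
      unfolding 1 2 by (simp add: td)
  qed
  also have "\<dots> = (\<Sum>q1<2. \<Sum>q2<2. \<Sum>a<2. \<Sum>b<2. \<Sum>c<2. \<Sum>d<2.
        M 0 0 (4*q1+2*a+c) * M 1 0 (4*q2+2*a+d) * M 2 o1 (2*b+c) * M 3 o2 (2*b+d) * (\<psi> q1 q2 / 4))"
    by (simp add: B6_def sum.cartesian_product)
  also have "\<dots> = (\<Sum>q1<2. \<Sum>q2<2. \<psi> q1 q2 * ((1/4) * (\<Sum>a<2. \<Sum>b<2. \<Sum>c<2. \<Sum>d<2.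
        M 0 0 (4*q1+2*a+c) * M 1 0 (4*q2+2*a+d) * M 3 o2 (2*b+d) * M 2 o1 (2*b+c))))"
    by (simp add: sum_distrib_left mult_ac)
  finally show ?thesis .
qed

lemma sq_sum: "(\<Sum>n\<in>T. f n * cnj (f n)) = complex_of_real (\<Sum>n\<in>T. (cmod (f n))^2)"
  by (simp only: of_real_sum complex_norm_square)

lemma zero_sum:
  assumes "finite T" "(\<Sum>n\<in>T. f n * cnj (f n)) = 0" "n \<in> T"
  shows "f n = 0"
proof -
  have "complex_of_real (\<Sum>n\<in>T. (cmod (f n))^2) = 0" using assms(2) sq_sum by metis
  hence "(\<Sum>n\<in>T. (cmod (f n))^2) = 0" by (simp only: of_real_eq_0_iff)
  hence "\<forall>n\<in>T. (cmod (f n))^2 = 0" by (subst (asm) sum_nonneg_eq_0_iff[OF assms(1)]) auto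
  thus ?thesis using assms(3) by simp
qed

lemma pos_sum:
  assumes "(\<Sum>n\<in>T. f n * cnj (f n)) = complex_of_real p" "p > 0"
  shows "\<exists>n\<in>T. f n \<noteq> 0"
proof (rule ccontr)
  assume "\<not> ?thesis"
  hence "(\<Sum>n\<in>T. f n * cnj (f n)) = 0" by simp
  thus False using assms by simp
qed

definition ebas :: "nat \<Rightarrow> nat \<Rightarrow> nat \<Rightarrow> nat \<Rightarrow> complex" where
  "ebas j m = (\<lambda>q1 q2. if q1 = j \<and> q2 = m then 1 else 0)"

definition esup :: "nat \<Rightarrow> nat \<Rightarrow> nat \<Rightarrow> nat \<Rightarrow> complex" where
  "esup j m = (\<lambda>q1 q2. complex_of_real (1 / sqrt 2) * (if (q1 = 0 \<and> q2 = 0) \<or> (q1 = j \<and> q2 = m) then 1 else 0))"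

lemma ebas_norm: "j < 2 \<Longrightarrow> m < 2 \<Longrightarrow> (\<Sum>a<2. \<Sum>b<2. (cmod (ebas j m a b))\<^sup>2) = 1"
  by (drule less2)+ (elim disjE; simp add: sum2 ebas_def)

lemma ebas_V: "j < 2 \<Longrightarrow> m < 2 \<Longrightarrow> (\<Sum>q1<2. \<Sum>q2<2. ebas j m q1 q2 * g q1 q2) = g j m"
  by (drule less2)+ (elim disjE; simp add: sum2 ebas_def)

lemma s_sq: "(cmod (complex_of_real (1 / sqrt 2)))^2 = 1/2"
proof -
  have h: "cmod (complex_of_real (1 / sqrt 2)) = 1 / sqrt 2" by (simp only: norm_of_real) simp
  show ?thesis unfolding h by (simp add: power_divide)
qed

lemma s_sq2: "(cmod (1 / complex_of_real (sqrt 2)))^2 = 1/2"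
proof -
  have h: "cmod (1 / complex_of_real (sqrt 2)) = 1 / sqrt 2" by (simp add: norm_divide)
  show ?thesis unfolding h by (simp add: power_divide)
qed

lemma s_sq3: "(cmod (1 / complex_of_real (sqrt 2)))^2 * 2 = 1"
proof -
  have h: "cmod (1 / complex_of_real (sqrt 2)) = 1 / sqrt 2" by (simp add: norm_divide)
  show ?thesis unfolding h by (simp add: power_divide)
qed

lemma esup_norm: "j < 2 \<Longrightarrow> m < 2 \<Longrightarrow> \<not> (j = 0 \<and> m = 0) \<Longrightarrow> (\<Sum>a<2. \<Sum>b<2. (cmod (esup j m a b))\<^sup>2) = 1"
  by (drule less2)+ (elim disjE; simp add: sum2 esup_def s_sq s_sq2 s_sq3 norm_mult power_mult_distrib)

lemma esup_V: "j < 2 \<Longrightarrow> m < 2 \<Longrightarrow> \<not> (j = 0 \<and> m = 0) \<Longrightarrow>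
   (\<Sum>q1<2. \<Sum>q2<2. esup j m q1 q2 * g q1 q2) = complex_of_real (1 / sqrt 2) * (g 0 0 + g j m)"
  by (drule less2)+ (elim disjE; simp add: sum2 esup_def algebra_simps)

lemma esup_val: "j < 2 \<Longrightarrow> m < 2 \<Longrightarrow> \<not> (j = 0 \<and> m = 0) \<Longrightarrow>
   esup j m 0 0 = complex_of_real (1 / sqrt 2) \<and> esup j m j m = complex_of_real (1 / sqrt 2)"
  by (simp add: esup_def)

lemma extract_lam:
  fixes G :: "nat \<Rightarrow> nat \<Rightarrow> nat \<Rightarrow> nat \<Rightarrow> nat \<Rightarrow> complex" and T :: "nat set" and p :: real
    and V :: "nat \<Rightarrow> (nat \<Rightarrow> nat \<Rightarrow> complex) \<Rightarrow> nat \<Rightarrow> nat \<Rightarrow> complex"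
  assumes fin: "finite T" and p: "p > 0"
    and H: "\<And>\<psi> a1 a2 b1 b2. (\<Sum>a<2. \<Sum>b<2. (cmod (\<psi> a b))\<^sup>2) = 1 \<Longrightarrow> a1 < 2 \<Longrightarrow> a2 < 2 \<Longrightarrow> b1 < 2 \<Longrightarrow> b2 < 2 \<Longrightarrow>
       (\<Sum>n\<in>T. V n \<psi> a1 a2 * cnj (V n \<psi> b1 b2)) = complex_of_real p * \<psi> a2 a1 * cnj (\<psi> b2 b1)"
    and V: "\<And>n \<psi> o1 o2. n \<in> T \<Longrightarrow> V n \<psi> o1 o2 = (\<Sum>q1<2. \<Sum>q2<2. \<psi> q1 q2 * G n q1 q2 o1 o2)"
  shows "\<exists>n\<in>T. \<exists>lam. lam \<noteq> 0 \<and> (\<forall>q1<2. \<forall>q2<2. \<forall>o1<2. \<forall>o2<2.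
            G n q1 q2 o1 o2 = (if o1 = q2 \<and> o2 = q1 then lam else 0))"
proof -
  have Vb: "V n (ebas j m) o1 o2 = G n j m o1 o2" if "n \<in> T" "j<2" "m<2" for n j m o1 o2
    using V[OF that(1)] ebas_V[OF that(2,3)] by simp
  have K1: "(\<Sum>n\<in>T. G n j m o1 o2 * cnj (G n j m o1 o2)) =
      complex_of_real p * ebas j m o2 o1 * cnj (ebas j m o2 o1)"
    if "j<2" "m<2" "o1<2" "o2<2" for j m o1 o2
  proof -
    have "(\<Sum>n\<in>T. G n j m o1 o2 * cnj (G n j m o1 o2)) = (\<Sum>n\<in>T. V n (ebas j m) o1 o2 * cnj (V n (ebas j m) o1 o2))"
      using Vb that by simp
    also have "\<dots> = complex_of_real p * ebas j m o2 o1 * cnj (ebas j m o2 o1)"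
      using H[OF ebas_norm[OF that(1,2)] that(3,4) that(3,4)] .
    finally show ?thesis .
  qed
  have Z: "G n j m o1 o2 = 0" if "n \<in> T" "j<2" "m<2" "o1<2" "o2<2" "\<not> (o1 = m \<and> o2 = j)" for n j m o1 o2
  proof -
    have "(\<Sum>n\<in>T. G n j m o1 o2 * cnj (G n j m o1 o2)) = 0"
      using K1[OF that(2-5)] that(6) by (auto simp: ebas_def)
    thus ?thesis using zero_sum[where f="\<lambda>n. G n j m o1 o2", OF fin _ that(1)] by simp
  qed
  have Eq: "G n 0 0 0 0 = G n j m m j" if "n \<in> T" "j<2" "m<2" "\<not> (j = 0 \<and> m = 0)" for n j m
  proof -
    let ?s = "complex_of_real (1 / sqrt 2)"
    have Vs: "V n (esup j m) o1 o2 = ?s * (G n 0 0 o1 o2 + G n j m o1 o2)" if "n \<in> T" for n o1 o2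
      using V[OF that] esup_V[OF \<open>j<2\<close> \<open>m<2\<close> \<open>\<not> (j = 0 \<and> m = 0)\<close>] by simp
    have v00: "V n (esup j m) 0 0 = ?s * G n 0 0 0 0" if "n \<in> T" for n
      using Vs[OF that, of 0 0] Z[OF that \<open>j<2\<close> \<open>m<2\<close>, of 0 0] \<open>\<not> (j = 0 \<and> m = 0)\<close> by auto
    have vmj: "V n (esup j m) m j = ?s * G n j m m j" if "n \<in> T" for n
      using Vs[OF that, of m j] Z[OF that _ _ \<open>m<2\<close> \<open>j<2\<close>, of 0 0] \<open>\<not> (j = 0 \<and> m = 0)\<close> by auto
    have nrm: "(\<Sum>a<2. \<Sum>b<2. (cmod (esup j m a b))\<^sup>2) = 1" using esup_norm that(2-4) .
    have ev: "esup j m 0 0 = ?s" "esup j m j m = ?s" using esup_val that(2-4) by auto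
    define c where "c = (\<lambda>n. ?s * G n 0 0 0 0)"
    define d where "d = (\<lambda>n. ?s * G n j m m j)"
    have h1: "(\<Sum>n\<in>T. c n * cnj (c n)) = complex_of_real p * ?s * cnj ?s"
      using H[OF nrm, of 0 0 0 0] v00 ev unfolding c_def by simp
    have h2: "(\<Sum>n\<in>T. c n * cnj (d n)) = complex_of_real p * ?s * cnj ?s"
      using H[OF nrm, of 0 0 m j] v00 vmj ev that unfolding c_def d_def by simp
    have h3: "(\<Sum>n\<in>T. d n * cnj (c n)) = complex_of_real p * ?s * cnj ?s"
      using H[OF nrm, of m j 0 0] v00 vmj ev that unfolding c_def d_def by simp
    have h4: "(\<Sum>n\<in>T. d n * cnj (d n)) = complex_of_real p * ?s * cnj ?s"
      using H[OF nrm, of m j m j] vmj ev that unfolding d_def by simp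
    have "(\<Sum>n\<in>T. (c n - d n) * cnj (c n - d n)) =
       (\<Sum>n\<in>T. c n * cnj (c n)) - (\<Sum>n\<in>T. c n * cnj (d n)) - (\<Sum>n\<in>T. d n * cnj (c n)) + (\<Sum>n\<in>T. d n * cnj (d n))"
      by (simp add: algebra_simps sum.distrib sum_subtractf)
    also have "\<dots> = 0" using h1 h2 h3 h4 by simp
    finally have "c n - d n = 0" using zero_sum[where f="\<lambda>n. c n - d n", OF fin _ that(1)] by simp
    thus ?thesis by (simp add: c_def d_def)
  qed
  have "(\<Sum>n\<in>T. G n 0 0 0 0 * cnj (G n 0 0 0 0)) = complex_of_real p"
    using K1[of 0 0 0 0] by (simp add: ebas_def)
  then obtain n where n: "n \<in> T" and nz: "G n 0 0 0 0 \<noteq> 0"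
    using pos_sum[where f="\<lambda>n. G n 0 0 0 0", OF _ p] by blast
  have "\<forall>q1<2. \<forall>q2<2. \<forall>o1<2. \<forall>o2<2.
            G n q1 q2 o1 o2 = (if o1 = q2 \<and> o2 = q1 then G n 0 0 0 0 else 0)"
  proof (intro allI impI)
    fix q1 q2 o1 o2 :: nat assume b: "q1<2" "q2<2" "o1<2" "o2<2"
    show "G n q1 q2 o1 o2 = (if o1 = q2 \<and> o2 = q1 then G n 0 0 0 0 else 0)"
    proof (cases "o1 = q2 \<and> o2 = q1")
      case True
      then show ?thesis using Eq[OF n b(1,2)] by (cases "q1 = 0 \<and> q2 = 0") auto
    next
      case False
      then show ?thesis using Z[OF n b False] False by auto
    qed
  qed
  thus ?thesis using n nz by blast
qed

lemma apply_U_SWAP: "a1 < 2 \<Longrightarrow> a2 < 2 \<Longrightarrow> apply_U U_SWAP \<psi> a1 a2 = \<psi> a2 a1"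
  by (drule less2)+ (elim disjE; simp add: apply_U_def sum2 U_SWAP_def)

theorem mainTheorem7:
  shows "\<not> prob_implementable U_SWAP"
proof
  assume "prob_implementable U_SWAP"
  then obtain L T p where loc: "locc cluster_dims L" and Tsub: "T \<subseteq> {..<length L}" and p: "p > 0"
    and cond: "\<forall>\<psi>. (\<Sum>a<2. \<Sum>b<2. (cmod (\<psi> a b))\<^sup>2) = 1 \<longrightarrow>
           (\<forall>a1<2. \<forall>a2<2. \<forall>b1<2. \<forall>b2<2.
              (\<Sum>n\<in>T. apply_vec cluster_dims (snd (L ! n)) (init_vec \<psi>) [0, 0, a1, a2]
                      * cnj (apply_vec cluster_dims (snd (L ! n)) (init_vec \<psi>) [0, 0, b1, b2]))
              = complex_of_real p * apply_U U_SWAP \<psi> a1 a2 * cnj (apply_U U_SWAP \<psi> b1 b2))"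
    unfolding prob_implementable_def by blast
  have fin: "finite T" using Tsub finite_subset by blast
  have allp: "\<forall>x\<in>set L. isprod x" using locc_isprod[OF loc] by (simp add: cluster_dims_def)
  have "\<forall>n\<in>T. \<exists>M. \<forall>i j. length i = 4 \<longrightarrow> length j = 4 \<longrightarrow> snd (L!n) i j = prodop M i j"
  proof
    fix n assume "n \<in> T"
    hence "L ! n \<in> set L" using Tsub by auto
    thus "\<exists>M. \<forall>i j. length i = 4 \<longrightarrow> length j = 4 \<longrightarrow> snd (L!n) i j = prodop M i j"
      using allp by (simp add: isprod_def)
  qed
  then obtain MM where MM: "\<forall>n\<in>T. \<forall>i j. length i = 4 \<longrightarrow> length j = 4 \<longrightarrow> snd (L!n) i j = prodop (MM n) i j"
    by (metis bchoice)
  define G where "G n q1 q2 o1 o2 = (1/4) * (\<Sum>a<2. \<Sum>b<2. \<Sum>c<2. \<Sum>d<2.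
        MM n 0 0 (4*q1+2*a+c) * MM n 1 0 (4*q2+2*a+d) * MM n 3 o2 (2*b+d) * MM n 2 o1 (2*b+c))"
    for n q1 q2 o1 o2
  define V where "V n \<psi> o1 o2 = apply_vec cluster_dims (snd (L!n)) (init_vec \<psi>) [0,0,o1,o2]"
    for n \<psi> o1 o2
  have Vf: "V n \<psi> o1 o2 = (\<Sum>q1<2. \<Sum>q2<2. \<psi> q1 q2 * G n q1 q2 o1 o2)" if "n \<in> T" for n \<psi> o1 o2
    unfolding V_def G_def using F[of "snd (L!n)" "MM n" \<psi> o1 o2] MM that by blast
  have H: "(\<Sum>n\<in>T. V n \<psi> a1 a2 * cnj (V n \<psi> b1 b2)) = complex_of_real p * \<psi> a2 a1 * cnj (\<psi> b2 b1)"
    if "(\<Sum>a<2. \<Sum>b<2. (cmod (\<psi> a b))\<^sup>2) = 1" "a1 < 2" "a2 < 2" "b1 < 2" "b2 < 2" for \<psi> a1 a2 b1 b2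
    using cond that apply_U_SWAP[OF that(2,3)] apply_U_SWAP[OF that(4,5)] unfolding V_def by simp
  obtain n lam where n: "n \<in> T" and lam: "lam \<noteq> 0"
    and Gn: "\<forall>q1<2. \<forall>q2<2. \<forall>o1<2. \<forall>o2<2. G n q1 q2 o1 o2 = (if o1 = q2 \<and> o2 = q1 then lam else 0)"
    using extract_lam[OF fin p H Vf] by blast
  show False
  proof (rule ring_impossible[where x="\<lambda>j c a. MM n 0 0 (4*j+2*a+c)" and y="\<lambda>m a d. MM n 1 0 (4*m+2*a+d)"
        and z="\<lambda>k d b. MM n 3 k (2*b+d)" and w="\<lambda>n' b c. MM n 2 n' (2*b+c)" and lam="4*lam"])
    fix j m k n' :: nat assume b: "j<2" "m<2" "k<2" "n'<2"
    have "(\<Sum>a<2. \<Sum>b<2. \<Sum>c<2. \<Sum>d<2. MM n 0 0 (4*j+2*a+c) * MM n 1 0 (4*m+2*a+d) * MM n 3 k (2*b+d) * MM n 2 n' (2*b+c))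
       = 4 * G n j m n' k" by (simp add: G_def)
    also have "\<dots> = (if j = k \<and> m = n' then 4 * lam else 0)" using Gn b by auto
    finally show "(\<Sum>a<2. \<Sum>b<2. \<Sum>c<2. \<Sum>d<2. MM n 0 0 (4*j+2*a+c) * MM n 1 0 (4*m+2*a+d) * MM n 3 k (2*b+d) * MM n 2 n' (2*b+c))
       = (if j = k \<and> m = n' then 4 * lam else 0)" .
  next
    show "4 * lam \<noteq> 0" using lam by simp
  qed
qed

end
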